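(* Let $x\in\Sigma^*$ and let $A$ be a weighted automaton over the tropical semiring. Then the edit-distance $d(x,A)$ can be computed in time $O(|x|\,|A|\log|A|_Q)$ and space $O(|x|+|A|)$ by running the generic shortest-distance algorithm on $U=X\circ T\circ A$ with the queue discipline $\prec_l$ derived from the shortest-first queue discipline $\prec$ (the discipline of Dijkstra's algorithm, extracting a state with smallest current tentative distance).
   Context: $\Sigma$ is a finite alphabet, $\Omega=(\Sigma\cup\{\epsilon\})^2\setminus\{(\epsilon,\epsilon)\}$, $c:\Omega\to\mathbb{R}_+$ an edit cost; alignments of $u,v$ are $\omega=\omega_1\cdots\omega_m\in\Omega^*$ whose concatenated first (second) components give $u$ ($v$), cost $c(\omega)=\sum c(\omega_i)$, and $d(u,v)$ is the minimal alignment cost. A weighted automaton $A=(\Sigma,Q,I,F,E,\lambda,\rho)$ over the tropical semiring $(\mathbb{R}_+\cup\{\infty\},\min,+,\infty,0)$ has transitions $(q,a,w,q')\in Q\times\Sigma\times(\mathbb{R}_+\cup\{\infty\})\times Q$, initial weights $\lambda$ on $I$, final weights $\rho$ on $F$; $A(y)$ is the minimum of $\lambda(\text{origin})+\text{sum of weights}+\rho(\text{destination})$ over accepting paths labeled $y$; $d(x,A)=\min_y(A(y)+d(x,y))$. $|A|_Q=|Q|$, $|A|=|Q|+|E|$. For $x=x_1\cdots x_n$, $U=X\circ T\circ A$ is the weighted graph with states $(i,j)$, $0\le i\le n$, $j\in Q$, transitions: $(i-1,j)\to(i,j')$ of weight $c(x_i,a)+w$ for each $(j,a,w,j')\in E$;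 $(i-1,j)\to(i,j)$ of weight $c(x_i,\epsilon)$; $(i,j)\to(i,j')$ of weight $c(\epsilon,a)+w$ for each $(j,a,w,j')\in E$; initial states $(0,j)$, $j\in I$, weight $\lambda(j)$; final states $(n,j)$, $j\in F$, weight $\rho(j)$. The level of $(i,j)$ is $i$. The generic shortest-distance algorithm keeps tentative distances $d[q]$ (initial weight for initial states, $\infty$ otherwise) and a queue $S$ (initially the initial states); while $S\neq\emptyset$ it extracts a state $q$ according to the queue discipline, and for each transition $e$ out of $q$, if $d[q]+w[e]<d[n[e]]$ it sets $d[n[e]]:=d[q]+w[e]$ and inserts $n[e]$ into $S$ if absent. For a queue discipline $\prec$, $q\prec_l q'$ iff $\mathrm{level}(q)<\mathrm{level}(q')$, or the levels are equal and $q\prec q'$. *)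

theory Defs
  imports Complex_Main "HOL-Library.Extended_Nonnegative_Real"
begin

text \<open>Edit operations: pairs over Sigma plus epsilon, epsilon encoded as None.
  Weights live in the tropical semiring R+ \<union> {\<infinity>}, represented by ennreal.\<close>

type_synonym 'a edit = "'a option \<times> 'a option"

definition Omega :: "'a edit set" where
  "Omega = {p. p \<noteq> (None, None)}"

definition opt_list :: "'a option \<Rightarrow> 'a list" where
  "opt_list o' = (case o' of None \<Rightarrow> [] | Some a \<Rightarrow> [a])"

definition align_left :: "'a edit list \<Rightarrow> 'a list" where
  "align_left \<omega> = concat (map (\<lambda>p. opt_list (fst p)) \<omega>)"

definition align_right :: "'a edit list \<Rightarrow> 'a list" where
  "align_right \<omega> = concat (map (\<lambda>p. opt_list (snd p)) \<omega>)"

definition alignments :: "'a list \<Rightarrow> 'a list \<Rightarrow> 'a edit list set" where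
  "alignments u v = {\<omega>. set \<omega> \<subseteq> Omega \<and> align_left \<omega> = u \<and> align_right \<omega> = v}"

definition align_cost :: "('a edit \<Rightarrow> ennreal) \<Rightarrow> 'a edit list \<Rightarrow> ennreal" where
  "align_cost c \<omega> = sum_list (map c \<omega>)"

definition edit_dist :: "('a edit \<Rightarrow> ennreal) \<Rightarrow> 'a list \<Rightarrow> 'a list \<Rightarrow> ennreal" where
  "edit_dist c u v = (INF \<omega>\<in>alignments u v. align_cost c \<omega>)"

record 'a wfa =
  states :: "nat set"
  init   :: "nat set"
  final  :: "nat set"
  trans  :: "(nat \<times> 'a \<times> ennreal \<times> nat) set"
  iw     :: "nat \<Rightarrow> ennreal"
  fw     :: "nat \<Rightarrow> ennreal"

definition wf_wfa :: "'a wfa \<Rightarrow> bool" where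
  "wf_wfa A \<longleftrightarrow> finite (states A) \<and> init A \<subseteq> states A \<and> final A \<subseteq> states A
     \<and> finite (trans A)
     \<and> (\<forall>(p, a, w, q) \<in> trans A. p \<in> states A \<and> q \<in> states A)"

fun is_path :: "'a wfa \<Rightarrow> nat \<Rightarrow> (nat \<times> 'a \<times> ennreal \<times> nat) list \<Rightarrow> nat \<Rightarrow> bool" where
  "is_path A p [] q \<longleftrightarrow> p = q"
| "is_path A p (e # es) q \<longleftrightarrow> e \<in> trans A \<and> fst e = p \<and> is_path A (snd (snd (snd e))) es q"

definition path_label :: "(nat \<times> 'a \<times> ennreal \<times> nat) list \<Rightarrow> 'a list" where
  "path_label es = map (\<lambda>e. fst (snd e)) es"

definition path_weight :: "(nat \<times> 'a \<times> ennreal \<times> nat) list \<Rightarrow> ennreal" where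
  "path_weight es = sum_list (map (\<lambda>e. fst (snd (snd e))) es)"

definition wfa_weight :: "'a wfa \<Rightarrow> 'a list \<Rightarrow> ennreal" where
  "wfa_weight A y = (INF (p, es, q) \<in> {(p, es, q). p \<in> init A \<and> q \<in> final A
        \<and> is_path A p es q \<and> path_label es = y}.
      iw A p + path_weight es + fw A q)"

definition dist_to_wfa :: "('a edit \<Rightarrow> ennreal) \<Rightarrow> 'a list \<Rightarrow> 'a wfa \<Rightarrow> ennreal" where
  "dist_to_wfa c x A = (INF y. wfa_weight A y + edit_dist c x y)"

definition wfa_size :: "'a wfa \<Rightarrow> nat" where
  "wfa_size A = card (states A) + card (trans A)"

text \<open>States are pairs (i, j) with level i.  The edge from level i to level i+1
  reads the symbol x_{i+1} = x ! i (0-based list indexing).\<close>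

type_synonym node = "nat \<times> nat"

definition U_edges :: "('a edit \<Rightarrow> ennreal) \<Rightarrow> 'a list \<Rightarrow> 'a wfa \<Rightarrow> (node \<times> ennreal \<times> node) set" where
  "U_edges c x A =
     {((i, j), c (Some (x ! i), Some a) + w, (Suc i, j')) | i j a w j'.
        i < length x \<and> (j, a, w, j') \<in> trans A}
   \<union> {((i, j), c (Some (x ! i), None), (Suc i, j)) | i j. i < length x \<and> j \<in> states A}
   \<union> {((i, j), c (None, Some a) + w, (i, j')) | i j a w j'.
        i \<le> length x \<and> (j, a, w, j') \<in> trans A}"

text \<open>Out-degree of a node in U, counted with multiplicity (one edge per generating
  transition / deletion), as used for the running time.\<close>
definition U_outdeg :: "'a list \<Rightarrow> 'a wfa \<Rightarrow> node \<Rightarrow> nat" where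
  "U_outdeg x A v =
     (if fst v < length x
      then 2 * card {e \<in> trans A. fst e = snd v} + (if snd v \<in> states A then 1 else 0)
      else if fst v = length x then card {e \<in> trans A. fst e = snd v} else 0)"

type_synonym conf = "(node \<Rightarrow> ennreal) \<times> node set"

definition init_conf :: "'a wfa \<Rightarrow> conf" where
  "init_conf A =
     ((\<lambda>v. if fst v = 0 \<and> snd v \<in> init A then iw A (snd v) else top),
      {(0, j) | j. j \<in> init A})"

definition sf_prec :: "(node \<Rightarrow> ennreal) \<Rightarrow> node \<Rightarrow> node \<Rightarrow> bool" where
  "sf_prec d q q' \<longleftrightarrow> d q < d q'"

definition level_prec :: "(node \<Rightarrow> node \<Rightarrow> bool) \<Rightarrow> node \<Rightarrow> node \<Rightarrow> bool" where
  "level_prec prec q q' \<longleftrightarrow> fst q < fst q' \<or> (fst q = fst q' \<and> prec q q')"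

definition step_via :: "('a edit \<Rightarrow> ennreal) \<Rightarrow> 'a list \<Rightarrow> 'a wfa \<Rightarrow> node \<Rightarrow> conf \<Rightarrow> conf \<Rightarrow> bool" where
  "step_via c x A q cf cf' \<longleftrightarrow>
     (let d = fst cf; S = snd cf;
          d' = (\<lambda>v. min (d v) (INF e \<in> {e \<in> U_edges c x A. fst e = q \<and> snd (snd e) = v}.
                                d q + fst (snd e)))
      in q \<in> S \<and> \<not> (\<exists>q' \<in> S. level_prec (sf_prec d) q' q)
         \<and> fst cf' = d' \<and> snd cf' = (S - {q}) \<union> {v. d' v < d v})"

definition is_run :: "('a edit \<Rightarrow> ennreal) \<Rightarrow> 'a list \<Rightarrow> 'a wfa \<Rightarrow> node list \<Rightarrow> conf list \<Rightarrow> bool" where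
  "is_run c x A qs cs \<longleftrightarrow> length cs = Suc (length qs) \<and> cs ! 0 = init_conf A
     \<and> (\<forall>k < length qs. step_via c x A (qs ! k) (cs ! k) (cs ! Suc k))"

text \<open>Time: with a binary heap, each extraction and each relaxation/insertion costs
  O(1 + log |S|).\<close>
definition run_time :: "'a list \<Rightarrow> 'a wfa \<Rightarrow> node list \<Rightarrow> conf list \<Rightarrow> real" where
  "run_time x A qs cs =
     (\<Sum>k < length qs. (1 + real (U_outdeg x A (qs ! k))) * (1 + log 2 (real (card (snd (cs ! k))))))"

text \<open>Space: the input x, the automaton A, and the tentative distances that are still
  live, i.e. finite distances at levels not below the current level (the least level
  present in the queue, or n when the queue is empty); lower levels can never change
  again and are discarded.\<close>
definition cur_level :: "nat \<Rightarrow> conf \<Rightarrow> nat" where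
  "cur_level n cf = (if snd cf = {} then n else Min (fst ` snd cf))"

definition conf_space :: "'a list \<Rightarrow> 'a wfa \<Rightarrow> conf \<Rightarrow> real" where
  "conf_space x A cf = real (length x + wfa_size A
      + card {v. fst cf v \<noteq> top \<and> fst v \<ge> cur_level (length x) cf})"

definition run_result :: "'a list \<Rightarrow> 'a wfa \<Rightarrow> conf \<Rightarrow> ennreal" where
  "run_result x A cf = (INF j \<in> final A. fst cf (length x, j) + fw A j)"

end

theory Submission
  imports Defs
begin


lemma INF_add_const_gen: "(INF i\<in>I. f i + c) = (INF i\<in>I. f i) + (c::ennreal)"
proof (cases "I = {}")
  case True then show ?thesis by simp
next
  case False
  show ?thesis
  using continuous_at_Inf_mono[of "\<lambda>x. x + c" "f`I"]
  using continuous_add[of "at_right (Inf (f`I))", of "\<lambda>x. x" "\<lambda>x. c"] False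
  by (auto simp: mono_def image_comp)
qed

lemma INF_const_add_gen: "(INF i\<in>I. c + f i) = (c::ennreal) + (INF i\<in>I. f i)"
  using INF_add_const_gen[of f c I] by (simp add: add.commute)

inductive upath :: "(node \<times> ennreal \<times> node) set \<Rightarrow> node \<Rightarrow> ennreal \<Rightarrow> node \<Rightarrow> bool"
  for E where
  refl: "upath E v 0 v"
| step: "(u, w, v) \<in> E \<Longrightarrow> upath E v w' t \<Longrightarrow> upath E u (w + w') t"

lemma upath_snoc: "upath E u w v \<Longrightarrow> (v, w', t) \<in> E \<Longrightarrow> upath E u (w + w') t"
proof (induction rule: upath.induct)
  case (refl v)
  then show ?case using upath.step[OF refl(1) upath.refl] by simp
next
  case (step u w v w'' t')
  then show ?case using upath.step[of u w v E] by (simp add: add.assoc)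
qed

definition gdist :: "(node \<times> ennreal \<times> node) set \<Rightarrow> (node \<Rightarrow> ennreal) \<Rightarrow> node \<Rightarrow> ennreal" where
  "gdist E s v = (INF p \<in> {(u, w). upath E u w v}. s (fst p) + snd p)"

lemma gdist_le: "upath E u w v \<Longrightarrow> gdist E s v \<le> s u + w"
  unfolding gdist_def by (rule INF_lower2[of "(u,w)"]) auto

lemma gdist_edge: assumes "(u, w, v) \<in> E" shows "gdist E s v \<le> gdist E s u + w"
proof -
  have "gdist E s v \<le> (INF p \<in> {(u', w'). upath E u' w' u}. s (fst p) + snd p + w)"
  proof (rule INF_greatest)
    fix p assume "p \<in> {(u', w'). upath E u' w' u}"
    then have "upath E (fst p) (snd p + w) v" using upath_snoc assms by (cases p) auto
    then show "gdist E s v \<le> s (fst p) + snd p + w" using gdist_le by (simp add: add.assoc)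
  qed
  also have "\<dots> = gdist E s u + w" unfolding gdist_def by (rule INF_add_const_gen)
  finally show ?thesis .
qed

definition relaxed :: "(node \<times> ennreal \<times> node) set \<Rightarrow> (node \<Rightarrow> ennreal) \<Rightarrow> node set \<Rightarrow> bool" where
  "relaxed E d S \<longleftrightarrow> (\<forall>u w v. (u, w, v) \<in> E \<longrightarrow> u \<notin> S \<longrightarrow> d v \<le> d u + w)"

definition cinv :: "(node \<times> ennreal \<times> node) set \<Rightarrow> (node \<Rightarrow> ennreal) \<Rightarrow> conf \<Rightarrow> bool" where
  "cinv E s cf \<longleftrightarrow> (\<forall>v. gdist E s v \<le> fst cf v) \<and> (\<forall>v. fst cf v \<le> s v) \<and> relaxed E (fst cf) (snd cf)"

definition relax :: "(node \<times> ennreal \<times> node) set \<Rightarrow> (node \<Rightarrow> ennreal) \<Rightarrow> node \<Rightarrow> node \<Rightarrow> ennreal" where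
  "relax E d q v = min (d v) (INF e \<in> {e \<in> E. fst e = q \<and> snd (snd e) = v}. d q + fst (snd e))"

lemma step_via_eq:
  "step_via c x A q cf cf' \<longleftrightarrow>
     q \<in> snd cf \<and> \<not> (\<exists>q' \<in> snd cf. level_prec (sf_prec (fst cf)) q' q)
     \<and> fst cf' = relax (U_edges c x A) (fst cf) q
     \<and> snd cf' = (snd cf - {q}) \<union> {v. relax (U_edges c x A) (fst cf) q v < fst cf v}"
  unfolding step_via_def relax_def Let_def by simp

lemma relax_le: "relax E d q v \<le> d v" unfolding relax_def by simp

lemma relax_edge: "(q, w, v) \<in> E \<Longrightarrow> relax E d q v \<le> d q + w"
  unfolding relax_def by (rule min.coboundedI2, rule INF_lower2[of "(q,w,v)"]) auto

lemma relax_cases: "relax E d q v = d v \<or> (d q \<le> relax E d q v \<and> (\<exists>w. (q, w, v) \<in> E))"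
proof (cases "relax E d q v = d v")
  case False
  then have lt: "relax E d q v < d v" using relax_le[of E d q v] by simp
  let ?I = "(INF e \<in> {e \<in> E. fst e = q \<and> snd (snd e) = v}. d q + fst (snd e))"
  have eq: "relax E d q v = ?I" using lt unfolding relax_def by (auto simp: min_def split: if_splits)
  have "d q \<le> ?I" by (rule INF_greatest) simp
  moreover have "\<exists>w. (q, w, v) \<in> E"
  proof (rule ccontr)
    assume "\<not> ?thesis"
    then have e0: "{e \<in> E. fst e = q \<and> snd (snd e) = v} = {}" by auto
    have itop: "?I = top" unfolding e0 by simp
    show False using lt eq itop by (metis top.extremum not_less)
  qed
  ultimately show ?thesis using eq by simp
qed simp

lemma relax_self: "relax E d q q = d q"
  using relax_cases[of E d q q] relax_le[of E d q q] by auto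

lemma cinv_step:
  assumes "cinv E s (d, S)" "q \<in> S"
  shows "cinv E s (relax E d q, (S - {q}) \<union> {v. relax E d q v < d v})"
proof -
  let ?d = "relax E d q"
  have 1: "\<forall>v. gdist E s v \<le> ?d v"
  proof
    fix v
    show "gdist E s v \<le> ?d v"
    proof (cases "?d v = d v")
      case True then show ?thesis using assms unfolding cinv_def fst_conv by metis
    next
      case False
      let ?I = "(INF e \<in> {e \<in> E. fst e = q \<and> snd (snd e) = v}. d q + fst (snd e))"
      have eq: "?d v = ?I" using False relax_le[of E d q v] unfolding relax_def
        by (auto simp: min_def split: if_splits)
      have "gdist E s v \<le> ?I"
      proof (rule INF_greatest)
        fix e assume "e \<in> {e \<in> E. fst e = q \<and> snd (snd e) = v}"
        then have "(q, fst (snd e), v) \<in> E" by (cases e) auto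
        then have "gdist E s v \<le> gdist E s q + fst (snd e)" by (rule gdist_edge)
        also have "\<dots> \<le> d q + fst (snd e)"
        proof -
          have "gdist E s q \<le> d q" using assms unfolding cinv_def fst_conv by blast
          then show ?thesis by (rule add_right_mono)
        qed
        finally show "gdist E s v \<le> d q + fst (snd e)" .
      qed
      then show ?thesis using eq by simp
    qed
  qed
  have 2: "\<forall>v. ?d v \<le> s v"
  proof
    fix v have "d v \<le> s v" using assms unfolding cinv_def fst_conv by blast
    then show "?d v \<le> s v" using relax_le[of E d q v] by (rule order.trans[rotated])
  qed
  have 3: "relaxed E ?d ((S - {q}) \<union> {v. ?d v < d v})"
    unfolding relaxed_def
  proof (intro allI impI)
    fix u w v assume e: "(u, w, v) \<in> E" and nu: "u \<notin> (S - {q}) \<union> {v. ?d v < d v}"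
    show "?d v \<le> ?d u + w"
    proof (cases "u = q")
      case True then show ?thesis using relax_edge[OF e[unfolded True]] relax_self by metis
    next
      case False
      then have "u \<notin> S" "?d u = d u" using nu relax_le[of E d q u] by auto
      then have "d v \<le> d u + w" using assms e unfolding cinv_def relaxed_def fst_conv snd_conv by blast
      then show ?thesis using relax_le[of E d q v] \<open>?d u = d u\<close> by (metis order.trans)
    qed
  qed
  show ?thesis using 1 2 3 unfolding cinv_def by simp
qed

lemma final_dist:
  assumes "cinv E s (d, {})"
  shows "d v = gdist E s v"
proof -
  have "upath E u w t \<Longrightarrow> d t \<le> d u + w" for u w t
  proof (induction rule: upath.induct)
    case (refl v) then show ?case by simp
  next
    case (step u w v w' t)
    have "d v \<le> d u + w" using assms step(1) unfolding cinv_def relaxed_def fst_conv snd_conv by blast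
    then have "d v + w' \<le> d u + w + w'" by (rule add_right_mono)
    then show ?case using step(3) by (metis add.assoc order.trans)
  qed
  moreover have "\<forall>v. d v \<le> s v" using assms unfolding cinv_def fst_conv by blast
  ultimately have "d v \<le> gdist E s v" unfolding gdist_def
  proof (intro INF_greatest)
    fix p assume h: "\<And>u w t. upath E u w t \<Longrightarrow> d t \<le> d u + w" "\<forall>v. d v \<le> s v"
      and p: "p \<in> {(u, w). upath E u w v}"
    then have "d v \<le> d (fst p) + snd p" by (cases p) auto
    also have "\<dots> \<le> s (fst p) + snd p" using h(2) add_right_mono by blast
    finally show "d v \<le> s (fst p) + snd p" .
  qed
  moreover have "gdist E s v \<le> d v" using assms unfolding cinv_def fst_conv by blast
  ultimately show ?thesis by (rule antisym)
qed



lemma align_left_simps[simp]: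
  "align_left [] = []" "align_left (p # \<omega>) = opt_list (fst p) @ align_left \<omega>"
  unfolding align_left_def by simp_all

lemma align_right_simps[simp]:
  "align_right [] = []" "align_right (p # \<omega>) = opt_list (snd p) @ align_right \<omega>"
  unfolding align_right_def by simp_all

lemma opt_list_simps[simp]: "opt_list None = []" "opt_list (Some a) = [a]"
  unfolding opt_list_def by simp_all

lemma align_cost_simps[simp]:
  "align_cost c [] = 0" "align_cost c (p # \<omega>) = c p + align_cost c \<omega>"
  unfolding align_cost_def by simp_all

lemma path_label_simps[simp]:
  "path_label [] = []" "path_label (e # es) = fst (snd e) # path_label es"
  unfolding path_label_def by simp_all

lemma path_label_Nil_iff[simp]: "path_label es = [] \<longleftrightarrow> es = []" "[] = path_label es \<longleftrightarrow> es = []"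
  unfolding path_label_def by auto

lemma path_weight_simps[simp]:
  "path_weight [] = 0" "path_weight (e # es) = fst (snd (snd e)) + path_weight es"
  unfolding path_weight_def by simp_all

lemma drop_Cons_conv: "drop i x = a # r \<Longrightarrow> i < length x \<and> x ! i = a \<and> drop (Suc i) x = r"
  by (metis Cons_nth_drop_Suc drop_all leI list.distinct(1) list.inject)

lemma Omega_Some1[simp]: "(Some a, b) \<in> Omega" and Omega_Some2[simp]: "(b, Some a) \<in> Omega"
  unfolding Omega_def by auto

lemma fwd:
  assumes wf: "wf_wfa A"
  shows "set \<omega> \<subseteq> Omega \<Longrightarrow> align_left \<omega> = drop i x \<Longrightarrow> align_right \<omega> = path_label es
     \<Longrightarrow> is_path A p es q \<Longrightarrow> p \<in> states A \<Longrightarrow> i \<le> length x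
     \<Longrightarrow> upath (U_edges c x A) (i, p) (path_weight es + align_cost c \<omega>) (length x, q)"
proof (induction \<omega> arbitrary: i p es)
  case Nil
  then have "i = length x" "es = []" by auto
  then show ?case using Nil upath.refl by auto
next
  case (Cons pr \<omega>)
  obtain a b where pr: "pr = (a, b)" by (cases pr)
  show ?case
  proof (cases a)
    case None
    then obtain b' where b: "b = Some b'" using Cons.prems(1) pr unfolding Omega_def by (cases b) auto
    obtain e es' where es: "es = e # es'" using Cons.prems(3) pr b by (cases es) auto
    obtain p0 a' w p' where e: "e = (p0, a', w, p')" by (cases e)
    have et: "(p, b', w, p') \<in> trans A" "a' = b'" "is_path A p' es' q" "align_right \<omega> = path_label es'"
      using Cons.prems(3,4) es e pr b by auto
    have p': "p' \<in> states A" using wf et(1) unfolding wf_wfa_def by auto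
    have al: "align_left \<omega> = drop i x" using Cons.prems(2) pr None by simp
    have IH: "upath (U_edges c x A) (i, p') (path_weight es' + align_cost c \<omega>) (length x, q)"
      using Cons.IH[OF _ al et(4) et(3) p' Cons.prems(6)] Cons.prems(1) by simp
    have edge: "((i, p), c (None, Some b') + w, (i, p')) \<in> U_edges c x A"
      unfolding U_edges_def using et(1) Cons.prems(6) by blast
    show ?thesis using upath.step[OF edge IH] es e pr b None et(2)
      by (simp add: ac_simps)
  next
    case (Some a')
    have al: "a' # align_left \<omega> = drop i x" using Cons.prems(2) pr Some by simp
    then have dx: "i < length x" "x ! i = a'" "drop (Suc i) x = align_left \<omega>"
      using drop_Cons_conv[OF al[symmetric]] by auto
    show ?thesis
    proof (cases b)
      case None
      have IH: "upath (U_edges c x A) (Suc i, p) (path_weight es + align_cost c \<omega>) (length x, q)"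
        using Cons.IH[OF _ dx(3)[symmetric] _ Cons.prems(4,5)] Cons.prems(1,3) dx(1) pr None by simp
      have edge: "((i, p), c (Some (x ! i), None), (Suc i, p)) \<in> U_edges c x A"
        unfolding U_edges_def using dx(1) Cons.prems(5) by blast
      show ?thesis using upath.step[OF edge IH] pr None Some dx(2) by (simp add: ac_simps)
    next
      case (Some b')
      obtain e es' where es: "es = e # es'" using Cons.prems(3) pr Some by (cases es) auto
      obtain p0 a'' w p' where e: "e = (p0, a'', w, p')" by (cases e)
      have et: "(p, b', w, p') \<in> trans A" "a'' = b'" "is_path A p' es' q" "align_right \<omega> = path_label es'"
        using Cons.prems(3,4) es e pr Some by auto
      have p': "p' \<in> states A" using wf et(1) unfolding wf_wfa_def by auto
      have IH: "upath (U_edges c x A) (Suc i, p') (path_weight es' + align_cost c \<omega>) (length x, q)"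
        using Cons.IH[OF _ dx(3)[symmetric] et(4) et(3) p'] Cons.prems(1) dx(1) by simp
      have edge: "((i, p), c (Some (x ! i), Some b') + w, (Suc i, p')) \<in> U_edges c x A"
        unfolding U_edges_def using et(1) dx(1) by blast
      show ?thesis using upath.step[OF edge IH] es e pr Some \<open>a = Some a'\<close> dx(2) et(2)
        by (simp add: ac_simps)
    qed
  qed
qed

lemma bwd:
  assumes wf: "wf_wfa A"
  shows "upath (U_edges c x A) u w t \<Longrightarrow> t = (length x, q) \<Longrightarrow> fst u \<le> length x \<Longrightarrow>
    \<exists>es \<omega>. is_path A (snd u) es q \<and> set \<omega> \<subseteq> Omega \<and> align_left \<omega> = drop (fst u) x
       \<and> align_right \<omega> = path_label es \<and> path_weight es + align_cost c \<omega> = w"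
proof (induction rule: upath.induct)
  case (refl v)
  then show ?case by (intro exI[of _ "[]"]) auto
next
  case (step u w v w' t)
  from step.hyps(1) show ?case unfolding U_edges_def
  proof (elim UnE CollectE exE conjE)
    fix i j a w0 j'
    assume h: "(u, w, v) = ((i, j), c (Some (x ! i), Some a) + w0, Suc i, j')" "i < length x"
      "(j, a, w0, j') \<in> trans A"
    then obtain es \<omega> where IH: "is_path A j' es q" "set \<omega> \<subseteq> Omega" "align_left \<omega> = drop (Suc i) x"
       "align_right \<omega> = path_label es" "path_weight es + align_cost c \<omega> = w'"
      using step.IH step.prems by auto
    show ?thesis
      apply (rule exI[of _ "(j, a, w0, j') # es"], rule exI[of _ "(Some (x ! i), Some a) # \<omega>"])
      using h IH by (auto simp: Cons_nth_drop_Suc ac_simps)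
  next
    fix i j
    assume h: "(u, w, v) = ((i, j), c (Some (x ! i), None), Suc i, j)" "i < length x"
    then obtain es \<omega> where IH: "is_path A j es q" "set \<omega> \<subseteq> Omega" "align_left \<omega> = drop (Suc i) x"
       "align_right \<omega> = path_label es" "path_weight es + align_cost c \<omega> = w'"
      using step.IH step.prems by auto
    show ?thesis
      apply (rule exI[of _ "es"], rule exI[of _ "(Some (x ! i), None) # \<omega>"])
      using h IH by (auto simp: Cons_nth_drop_Suc ac_simps)
  next
    fix i j a w0 j'
    assume h: "(u, w, v) = ((i, j), c (None, Some a) + w0, i, j')" "i \<le> length x"
      "(j, a, w0, j') \<in> trans A"
    then obtain es \<omega> where IH: "is_path A j' es q" "set \<omega> \<subseteq> Omega" "align_left \<omega> = drop i x"
       "align_right \<omega> = path_label es" "path_weight es + align_cost c \<omega> = w'"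
      using step.IH step.prems by auto
    show ?thesis
      apply (rule exI[of _ "(j, a, w0, j') # es"], rule exI[of _ "(None, Some a) # \<omega>"])
      using h IH by (auto simp: ac_simps)
  qed
qed



lemma init_fst: "fst (init_conf A) v = (if fst v = 0 \<and> snd v \<in> init A then iw A (snd v) else top)"
  unfolding init_conf_def by simp

lemma result_correct:
  assumes wf: "wf_wfa A" and dd: "\<forall>v. d v = gdist (U_edges c x A) (fst (init_conf A)) v"
  shows "run_result x A (d, S) = dist_to_wfa c x A"
proof (rule antisym)
  let ?E = "U_edges c x A" and ?s = "fst (init_conf A)"
  show "run_result x A (d, S) \<le> dist_to_wfa c x A"
    unfolding dist_to_wfa_def
  proof (rule INF_greatest)
    fix y
    have "run_result x A (d, S) \<le> (INF P \<in> {(p, es, q). p \<in> init A \<and> q \<in> final A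
        \<and> is_path A p es q \<and> path_label es = y}.
      (case P of (p, es, q) \<Rightarrow> iw A p + path_weight es + fw A q) + edit_dist c x y)"
    proof (rule INF_greatest)
      fix P assume P: "P \<in> {(p, es, q). p \<in> init A \<and> q \<in> final A \<and> is_path A p es q \<and> path_label es = y}"
      obtain p es q where Pe: "P = (p, es, q)" by (cases P)
      have h: "p \<in> init A" "q \<in> final A" "is_path A p es q" "path_label es = y" using P Pe by auto
      have pst: "p \<in> states A" using h(1) wf unfolding wf_wfa_def by auto
      have "run_result x A (d, S) \<le> (INF \<omega> \<in> alignments x y. iw A p + path_weight es + fw A q + align_cost c \<omega>)"
      proof (rule INF_greatest)
        fix \<omega> assume "\<omega> \<in> alignments x y"
        then have a: "set \<omega> \<subseteq> Omega" "align_left \<omega> = drop 0 x" "align_right \<omega> = path_label es"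
          using h(4) unfolding alignments_def by auto
        have up: "upath ?E (0, p) (path_weight es + align_cost c \<omega>) (length x, q)"
          using fwd[OF wf a h(3) pst] by simp
        have "run_result x A (d, S) \<le> d (length x, q) + fw A q"
          unfolding run_result_def using h(2) by (auto intro: INF_lower2)
        also have "\<dots> \<le> (?s (0, p) + (path_weight es + align_cost c \<omega>)) + fw A q"
          using gdist_le[OF up, of ?s] dd by (simp add: add_right_mono)
        also have "\<dots> = iw A p + path_weight es + fw A q + align_cost c \<omega>"
          using h(1) by (simp add: init_fst ac_simps)
        finally show "run_result x A (d, S) \<le> iw A p + path_weight es + fw A q + align_cost c \<omega>" .
      qed
      also have "\<dots> = iw A p + path_weight es + fw A q + edit_dist c x y"
        unfolding edit_dist_def by (rule INF_const_add_gen)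
      finally show "run_result x A (d, S) \<le> (case P of (p, es, q) \<Rightarrow> iw A p + path_weight es + fw A q) + edit_dist c x y"
        using Pe by simp
    qed
    also have "\<dots> = wfa_weight A y + edit_dist c x y"
      unfolding wfa_weight_def by (rule INF_add_const_gen)
    finally show "run_result x A (d, S) \<le> wfa_weight A y + edit_dist c x y" .
  qed
next
  let ?E = "U_edges c x A" and ?s = "fst (init_conf A)"
  show "dist_to_wfa c x A \<le> run_result x A (d, S)"
    unfolding run_result_def fst_conv
  proof (rule INF_greatest)
    fix q assume q: "q \<in> final A"
    have "dist_to_wfa c x A \<le> (INF p \<in> {(u, w). upath ?E u w (length x, q)}. ?s (fst p) + snd p + fw A q)"
    proof (rule INF_greatest)
      fix P assume "P \<in> {(u, w). upath ?E u w (length x, q)}"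
      then obtain u w where P: "P = (u, w)" "upath ?E u w (length x, q)" by auto
      show "dist_to_wfa c x A \<le> ?s (fst P) + snd P + fw A q"
      proof (cases "fst u = 0 \<and> snd u \<in> init A")
        case False then have "?s u = top" by (simp only: init_fst if_False)
        then show ?thesis using P by simp
      next
        case True
        obtain es \<omega> where b: "is_path A (snd u) es q" "set \<omega> \<subseteq> Omega" "align_left \<omega> = drop (fst u) x"
          "align_right \<omega> = path_label es" "path_weight es + align_cost c \<omega> = w"
          using bwd[OF wf P(2) HOL.refl] True by auto
        let ?y = "path_label es"
        have "dist_to_wfa c x A \<le> wfa_weight A ?y + edit_dist c x ?y"
          unfolding dist_to_wfa_def by (rule INF_lower) simp
        also have "\<dots> \<le> (iw A (snd u) + path_weight es + fw A q) + align_cost c \<omega>"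
        proof (rule add_mono)
          show "wfa_weight A ?y \<le> iw A (snd u) + path_weight es + fw A q"
            unfolding wfa_weight_def
            by (rule INF_lower2[of "(snd u, es, q)"]) (use True q b in auto)
          show "edit_dist c x ?y \<le> align_cost c \<omega>"
            unfolding edit_dist_def
            by (rule INF_lower) (use True b in \<open>auto simp: alignments_def\<close>)
        qed
        also have "\<dots> = ?s (fst P) + snd P + fw A q"
          using True P b(5) by (simp add: init_fst ac_simps)
        finally show ?thesis .
      qed
    qed
    also have "\<dots> = gdist ?E ?s (length x, q) + fw A q"
      unfolding gdist_def by (rule INF_add_const_gen)
    finally show "dist_to_wfa c x A \<le> d (length x, q) + fw A q" using dd by simp
  qed
qed



definition kinv :: "'a list \<Rightarrow> 'a wfa \<Rightarrow> conf \<Rightarrow> node set \<Rightarrow> bool" where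
  "kinv x A cf X \<longleftrightarrow>
    (\<forall>v. fst cf v \<noteq> top \<longrightarrow> fst v \<le> length x \<and> snd v \<in> states A)
  \<and> (\<forall>v \<in> snd cf. fst v \<le> length x \<and> snd v \<in> states A)
  \<and> (\<exists>l. (\<forall>v \<in> snd cf. l \<le> fst v \<and> fst v \<le> Suc l) \<and> (\<forall>v. fst cf v \<noteq> top \<longrightarrow> fst v \<le> Suc l))
  \<and> X \<inter> snd cf = {}
  \<and> (\<forall>v \<in> X. \<forall>u \<in> snd cf. fst v \<le> fst u \<and> (fst v = fst u \<longrightarrow> fst cf v \<le> fst cf u))"

lemma U_edge_props:
  assumes wf: "wf_wfa A" and e: "(u, w, v) \<in> U_edges c x A"
  shows "fst u \<le> fst v \<and> fst v \<le> Suc (fst u) \<and> fst v \<le> length x \<and> snd v \<in> states A"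
  using e wf unfolding U_edges_def wf_wfa_def by auto

lemma kinv_init: "wf_wfa A \<Longrightarrow> kinv x A (init_conf A) {}"
  unfolding kinv_def init_conf_def wf_wfa_def
  by (intro conjI exI[of _ 0]) auto

lemma kinv_step:
  assumes wf: "wf_wfa A" and inv: "kinv x A (d, S) X"
    and st: "step_via c x A q (d, S) cf'"
  shows "kinv x A cf' (insert q X)"
proof -
  let ?E = "U_edges c x A"
  let ?d = "relax ?E d q"
  have qS: "q \<in> S" and mn: "\<And>q'. q' \<in> S \<Longrightarrow> fst q \<le> fst q' \<and> (fst q' = fst q \<longrightarrow> d q \<le> d q')"
    and cf': "cf' = (?d, (S - {q}) \<union> {v. ?d v < d v})"
    using st unfolding step_via_eq level_prec_def sf_prec_def
    by (auto simp: not_less prod_eq_iff)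
  have I1: "\<And>v. d v \<noteq> top \<Longrightarrow> fst v \<le> length x \<and> snd v \<in> states A"
    and I2: "\<And>v. v \<in> S \<Longrightarrow> fst v \<le> length x \<and> snd v \<in> states A"
    and I4: "X \<inter> S = {}"
    and I5: "\<And>v u. v \<in> X \<Longrightarrow> u \<in> S \<Longrightarrow> fst v \<le> fst u \<and> (fst v = fst u \<longrightarrow> d v \<le> d u)"
    using inv unfolding kinv_def by auto
  obtain l where I3: "\<And>v. v \<in> S \<Longrightarrow> l \<le> fst v \<and> fst v \<le> Suc l" "\<And>v. d v \<noteq> top \<Longrightarrow> fst v \<le> Suc l"
    using inv unfolding kinv_def fst_conv snd_conv by blast
  have rc: "\<And>v. ?d v = d v \<or> (d q \<le> ?d v \<and> (\<exists>w. (q, w, v) \<in> ?E))" by (rule relax_cases)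
  have rl: "\<And>v. ?d v \<le> d v" by (rule relax_le)
  have imp: "\<And>v. ?d v < d v \<Longrightarrow> d q \<le> ?d v \<and> fst q \<le> fst v \<and> fst v \<le> Suc (fst q) \<and> fst v \<le> length x \<and> snd v \<in> states A"
    using rc U_edge_props[OF wf] by (metis fst_conv less_irrefl)
  have lq: "l \<le> fst q" using I3(1)[OF qS] by simp
  have Xq: "\<And>v. v \<in> X \<Longrightarrow> fst v \<le> fst q \<and> (fst v = fst q \<longrightarrow> d v \<le> d q)" using I5 qS by blast
  have dX: "\<And>v. v \<in> insert q X \<Longrightarrow> ?d v = d v"
  proof -
    fix v assume "v \<in> insert q X"
    then show "?d v = d v"
    proof
      assume "v = q" then show ?thesis using relax_self by metis
    next
      assume vX: "v \<in> X"
      show ?thesis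
      proof (rule ccontr)
        assume "?d v \<noteq> d v"
        then have lt: "?d v < d v" using rl[of v] by simp
        from imp[OF lt] Xq[OF vX] have "d v \<le> d q" by simp
        then show False using imp[OF lt] lt by (metis leD order.trans)
      qed
    qed
  qed
  have S'cases: "\<And>u. u \<in> (S - {q}) \<union> {v. ?d v < d v} \<Longrightarrow>
     (u \<in> S \<and> u \<noteq> q \<and> ?d u = d u) \<or> (?d u < d u)"
    using rl by (auto simp: order.order_iff_strict)
  have P1: "\<forall>v. ?d v \<noteq> top \<longrightarrow> fst v \<le> length x \<and> snd v \<in> states A"
    using I1 imp rl by (metis order.not_eq_order_implies_strict)
  have P2: "\<forall>v \<in> (S - {q}) \<union> {v. ?d v < d v}. fst v \<le> length x \<and> snd v \<in> states A"
    using I2 imp by blast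
  have P3a: "\<forall>v \<in> (S - {q}) \<union> {v. ?d v < d v}. fst q \<le> fst v \<and> fst v \<le> Suc (fst q)"
  proof
    fix v assume "v \<in> (S - {q}) \<union> {v. ?d v < d v}"
    then show "fst q \<le> fst v \<and> fst v \<le> Suc (fst q)"
      using mn I3(1) lq imp by fastforce
  qed
  have P3b: "\<forall>v. ?d v \<noteq> top \<longrightarrow> fst v \<le> Suc (fst q)"
  proof (intro allI impI)
    fix v assume "?d v \<noteq> top"
    then show "fst v \<le> Suc (fst q)"
      using I3(2) lq imp rl by (metis Suc_le_mono le_trans order.not_eq_order_implies_strict)
  qed
  have P4: "insert q X \<inter> ((S - {q}) \<union> {v. ?d v < d v}) = {}"
    using dX I4 by auto
  have P5: "\<forall>v \<in> insert q X. \<forall>u \<in> (S - {q}) \<union> {v. ?d v < d v}.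
      fst v \<le> fst u \<and> (fst v = fst u \<longrightarrow> ?d v \<le> ?d u)"
  proof (intro ballI)
    fix v u assume v: "v \<in> insert q X" and u: "u \<in> (S - {q}) \<union> {v. ?d v < d v}"
    have fu: "fst q \<le> fst u" using u mn imp by blast
    have lowu: "(u \<in> S \<and> ?d u = d u) \<or> d q \<le> ?d u" using S'cases[OF u] imp by blast
    show "fst v \<le> fst u \<and> (fst v = fst u \<longrightarrow> ?d v \<le> ?d u)"
    proof (cases "v = q")
      case True
      have "fst v = fst u \<longrightarrow> ?d v \<le> ?d u"
        using lowu mn dX v True by (metis)
      then show ?thesis using fu True by simp
    next
      case False
      then have vX: "v \<in> X" using v by simp
      have "fst v = fst u \<longrightarrow> ?d v \<le> ?d u"
      proof
        assume eq: "fst v = fst u"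
        then have "fst v = fst q" using Xq[OF vX] fu by simp
        then have "d v \<le> d q" using Xq[OF vX] by simp
        then show "?d v \<le> ?d u" using lowu I5[OF vX] dX[OF v] eq by (metis order.trans)
      qed
      then show ?thesis using Xq[OF vX] fu by simp
    qed
  qed
  show ?thesis unfolding kinv_def cf' fst_conv snd_conv
    using P1 P2 P3a P3b P4 P5 by blast
qed



lemma cinv_init:
  "cinv (U_edges c x A) (fst (init_conf A)) (init_conf A)"
proof -
  let ?s = "fst (init_conf A)"
  have "relaxed (U_edges c x A) ?s (snd (init_conf A))"
    unfolding relaxed_def
  proof (intro allI impI)
    fix u w v assume "u \<notin> snd (init_conf A)"
    then have "?s u = top" unfolding init_conf_def by (cases u) auto
    then show "?s v \<le> ?s u + w" by simp
  qed
  moreover have "\<forall>v. gdist (U_edges c x A) ?s v \<le> ?s v"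
    using gdist_le[OF upath.refl] by simp
  ultimately show ?thesis unfolding cinv_def by simp
qed

lemma run_inv:
  assumes wf: "wf_wfa A" and run: "is_run c x A qs cs"
  shows "k \<le> length qs \<Longrightarrow> kinv x A (cs ! k) (set (take k qs))
     \<and> cinv (U_edges c x A) (fst (init_conf A)) (cs ! k)"
proof (induction k)
  case 0
  then show ?case using run kinv_init[OF wf] cinv_init unfolding is_run_def by simp
next
  case (Suc k)
  then have k: "k < length qs" by simp
  have st: "step_via c x A (qs ! k) (cs ! k) (cs ! Suc k)" using run k unfolding is_run_def by simp
  obtain d S where dS: "cs ! k = (d, S)" by (cases "cs ! k")
  have IH: "kinv x A (d, S) (set (take k qs))" "cinv (U_edges c x A) (fst (init_conf A)) (d, S)"
    using Suc k dS by auto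
  have tk: "set (take (Suc k) qs) = insert (qs ! k) (set (take k qs))"
    using k by (simp add: take_Suc_conv_app_nth)
  have A: "kinv x A (cs ! Suc k) (set (take (Suc k) qs))"
    using kinv_step[OF wf IH(1)] st dS tk by simp
  have qS: "qs ! k \<in> S" and cf': "cs ! Suc k = (relax (U_edges c x A) d (qs ! k),
      (S - {qs ! k}) \<union> {v. relax (U_edges c x A) d (qs ! k) v < d v})"
    using st dS unfolding step_via_eq by (auto simp: prod_eq_iff)
  have B: "cinv (U_edges c x A) (fst (init_conf A)) (cs ! Suc k)"
    using cinv_step[OF IH(2) qS] cf' by simp
  show ?case using A B by simp
qed

lemma sum_deg_le:
  assumes "finite Q" "finite E"
  shows "(\<Sum>j\<in>Q. card {e \<in> E. fst e = j}) \<le> card E"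
proof -
  have "(\<Sum>j\<in>Q. card {e \<in> E. fst e = j}) = card (\<Union>j\<in>Q. {e \<in> E. fst e = j})"
    by (rule card_UN_disjoint[symmetric]) (use assms in auto)
  also have "\<dots> \<le> card E" by (rule card_mono) (use assms in auto)
  finally show ?thesis .
qed

lemma outdeg_le: "U_outdeg x A v \<le> 2 * card {e \<in> trans A. fst e = snd v} + 1"
  unfolding U_outdeg_def by auto



lemma kinv_level:
  assumes "kinv x A (d, S) X"
  obtains l where "S \<subseteq> {l, Suc l} \<times> states A" "{v. d v \<noteq> top} \<subseteq> {..Suc l} \<times> states A"
    "\<forall>v\<in>S. l \<le> fst v"
proof -
  from assms obtain l where l: "\<forall>v \<in> S. l \<le> fst v \<and> fst v \<le> Suc l" "\<forall>v. d v \<noteq> top \<longrightarrow> fst v \<le> Suc l"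
    and Q1: "\<forall>v \<in> S. fst v \<le> length x \<and> snd v \<in> states A"
    and Q2: "\<forall>v. d v \<noteq> top \<longrightarrow> fst v \<le> length x \<and> snd v \<in> states A"
    unfolding kinv_def fst_conv snd_conv by blast
  have "S \<subseteq> {l, Suc l} \<times> states A"
  proof
    fix v assume "v \<in> S"
    then have "l \<le> fst v" "fst v \<le> Suc l" "snd v \<in> states A" using l Q1 by auto
    then have "fst v \<in> {l, Suc l}" by auto
    then show "v \<in> {l, Suc l} \<times> states A" using \<open>snd v \<in> states A\<close> by (simp add: mem_Times_iff)
  qed
  moreover have "{v. d v \<noteq> top} \<subseteq> {..Suc l} \<times> states A"
    using l(2) Q2 by (auto simp: mem_Times_iff)
  ultimately show ?thesis using that l(1) by blast
qed

lemma card_two_prod: "finite Q \<Longrightarrow> card ({l, Suc l} \<times> Q) = 2 * card Q"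
  by (simp add: card_cartesian_product)


lemma time_bound:
  assumes wf: "wf_wfa A" and run: "is_run c x A qs cs"
  shows "run_time x A qs cs \<le> 12 * max 1 (real (length x)) * real (wfa_size A)
                    * max 1 (log 2 (real (card (states A))))"
proof -
  let ?n = "length x" and ?Q = "states A" and ?T = "trans A"
  let ?m = "card ?Q" and ?M = "max 1 (log 2 (real (card (states A))))"
  let ?N = "{0..?n} \<times> ?Q"
  let ?deg = "\<lambda>j. card {e \<in> ?T. fst e = j}"
  have finQ: "finite ?Q" and finT: "finite ?T" using wf unfolding wf_wfa_def by auto
  have finN: "finite ?N" using finQ by simp
  have len: "length cs = Suc (length qs)" using run unfolding is_run_def by simp
  have K: "qs ! k \<in> snd (cs ! k) \<and> qs ! k \<notin> set (take k qs) \<and> qs ! k \<in> ?N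
      \<and> 1 + log 2 (real (card (snd (cs ! k)))) \<le> 3 * ?M" if k: "k < length qs" for k
  proof -
    obtain d S where dS: "cs ! k = (d, S)" by (cases "cs ! k")
    have st: "step_via c x A (qs ! k) (cs ! k) (cs ! Suc k)" using run k unfolding is_run_def by simp
    have "qs ! k \<in> snd (cs ! k)" using st unfolding step_via_eq by (elim conjE)
    then have qS: "qs ! k \<in> S" unfolding dS snd_conv .
    have ki: "kinv x A (d, S) (set (take k qs))" using run_inv[OF wf run, of k] k unfolding dS by simp
    have dj: "set (take k qs) \<inter> S = {}"
      using ki unfolding kinv_def fst_conv snd_conv by (elim conjE exE) assumption
    have inS: "\<forall>v \<in> S. fst v \<le> ?n \<and> snd v \<in> ?Q"
      using ki unfolding kinv_def fst_conv snd_conv by (elim conjE exE) assumption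
    have dis: "qs ! k \<notin> set (take k qs)" using dj qS by blast
    have inN0: "fst (qs ! k) \<le> ?n \<and> snd (qs ! k) \<in> ?Q" using inS qS by blast
    have inN: "qs ! k \<in> ?N" using inN0 by (simp add: mem_Times_iff)
    obtain l where l: "S \<subseteq> {l, Suc l} \<times> ?Q" and "{v. d v \<noteq> top} \<subseteq> {..Suc l} \<times> ?Q"
      and "\<forall>v\<in>S. l \<le> fst v" by (rule kinv_level[OF ki])
    have "card S \<le> card ({l, Suc l} \<times> ?Q)" by (rule card_mono[OF _ l]) (use finQ in simp)
    then have cS: "card S \<le> 2 * ?m" using card_two_prod[OF finQ] by simp
    have finS: "finite S" by (rule finite_subset[OF l]) (use finQ in simp)
    have "card S \<noteq> 0" using qS finS by auto
    then have cS1: "1 \<le> card S" by simp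
    have m1: "1 \<le> ?m" using cS cS1 by simp
    have "log 2 (real (card S)) \<le> log 2 (2 * real ?m)"
      using cS cS1 by (subst log_le_cancel_iff) auto
    also have "\<dots> = 1 + log 2 (real ?m)" using m1 by (subst log_mult) auto
    finally have "1 + log 2 (real (card S)) \<le> 2 + log 2 (real ?m)" by simp
    also have "\<dots> \<le> 3 * ?M" by simp
    finally have lg: "1 + log 2 (real (card S)) \<le> 3 * ?M" .
    show ?thesis unfolding dS snd_conv using qS dis inN lg by blast
  qed
  have distinct: "distinct qs"
    unfolding distinct_conv_nth
  proof (intro allI impI)
    fix i j assume "i < length qs" "j < length qs" "i \<noteq> j"
    show "qs ! i \<noteq> qs ! j"
    proof (cases "i < j")
      case True
      have "take j qs ! i \<in> set (take j qs)" using True \<open>j < length qs\<close> by (intro nth_mem) simp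
      then have "qs ! i \<in> set (take j qs)" using True by simp
      then show ?thesis using K[OF \<open>j < length qs\<close>] by auto
    next
      case False
      then have ji: "j < i" using \<open>i \<noteq> j\<close> by simp
      have "take i qs ! j \<in> set (take i qs)" using ji \<open>i < length qs\<close> by (intro nth_mem) simp
      then have "qs ! j \<in> set (take i qs)" using ji by simp
      then show ?thesis using K[OF \<open>i < length qs\<close>] by auto
    qed
  qed
  have setN: "set qs \<subseteq> ?N"
  proof
    fix v assume "v \<in> set qs"
    then obtain k where k: "k < length qs" "v = qs ! k" by (auto simp: in_set_conv_nth)
    show "v \<in> ?N" using K[OF k(1)] unfolding k(2) by (elim conjE) assumption
  qed
  let ?h = "\<lambda>v. 1 + U_outdeg x A v"
  have "(\<Sum>k<length qs. ?h (qs ! k)) = sum_list (map ?h qs)"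
    by (simp add: sum_list_sum_nth atLeast0LessThan)
  also have "\<dots> = sum ?h (set qs)" using distinct by (rule sum_list_distinct_conv_sum_set)
  also have "\<dots> \<le> sum ?h ?N" by (rule sum_mono2[OF finN setN]) simp
  also have "\<dots> \<le> (\<Sum>v\<in>?N. 2 + 2 * ?deg (snd v))"
    by (rule sum_mono) (use outdeg_le[of x A] in fastforce)
  also have "\<dots> = (\<Sum>i\<in>{0..?n}. \<Sum>j\<in>?Q. 2 + 2 * ?deg j)"
    by (simp only: sum.cartesian_product split_def)
  also have "\<dots> = Suc ?n * (2 * ?m + 2 * (\<Sum>j\<in>?Q. ?deg j))"
  proof -
    have "(\<Sum>j\<in>?Q. 2 + 2 * ?deg j) = 2 * ?m + 2 * (\<Sum>j\<in>?Q. ?deg j)"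
      by (subst sum.distrib) (simp add: sum_distrib_left)
    then show ?thesis by simp
  qed
  also have "\<dots> \<le> Suc ?n * (2 * ?m + 2 * card ?T)"
    by (rule mult_le_mono2) (use sum_deg_le[OF finQ finT] in simp)
  also have "\<dots> = 2 * Suc ?n * wfa_size A" unfolding wfa_size_def by simp
  finally have S1: "(\<Sum>k<length qs. ?h (qs ! k)) \<le> 2 * Suc ?n * wfa_size A" .
  have "run_time x A qs cs \<le> (\<Sum>k<length qs. (1 + real (U_outdeg x A (qs ! k))) * (3 * ?M))"
    unfolding run_time_def
    by (rule sum_mono, rule mult_left_mono) (use K in auto)
  also have "\<dots> = real (\<Sum>k<length qs. ?h (qs ! k)) * (3 * ?M)"
    by (simp add: sum_distrib_right)
  also have "\<dots> \<le> real (2 * Suc ?n * wfa_size A) * (3 * ?M)"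
    by (rule mult_right_mono[OF of_nat_mono[OF S1]]) simp
  also have "\<dots> \<le> 12 * max 1 (real ?n) * real (wfa_size A) * ?M"
  proof -
    have a: "real (Suc ?n) \<le> 2 * max 1 (real ?n)" by simp
    have "real (2 * Suc ?n * wfa_size A) = 2 * real (Suc ?n) * real (wfa_size A)" by (simp only: of_nat_mult of_nat_numeral)
    also have "\<dots> \<le> 2 * (2 * max 1 (real ?n)) * real (wfa_size A)"
      by (intro mult_right_mono mult_left_mono a) auto
    finally have b: "real (2 * Suc ?n * wfa_size A) \<le> 4 * max 1 (real ?n) * real (wfa_size A)"
      by simp
    have "real (2 * Suc ?n * wfa_size A) * (3 * ?M) \<le> (4 * max 1 (real ?n) * real (wfa_size A)) * (3 * ?M)"
      by (rule mult_right_mono[OF b]) simp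
    then show ?thesis by (simp add: mult_ac)
  qed
  finally show ?thesis .
qed


lemma space_bound:
  assumes wf: "wf_wfa A" and run: "is_run c x A qs cs" and k: "k < length cs"
  shows "conf_space x A (cs ! k) \<le> 12 * real (length x + wfa_size A)"
proof -
  let ?n = "length x" and ?Q = "states A" and ?m = "card (states A)"
  have finQ: "finite ?Q" using wf unfolding wf_wfa_def by auto
  have len: "length cs = Suc (length qs)" using run unfolding is_run_def by simp
  obtain d S where dS: "cs ! k = (d, S)" by (cases "cs ! k")
  have ki: "kinv x A (d, S) (set (take k qs))" using run_inv[OF wf run, of k] k len unfolding dS by simp
  obtain l where l: "S \<subseteq> {l, Suc l} \<times> ?Q" and fl: "{v. d v \<noteq> top} \<subseteq> {..Suc l} \<times> ?Q"
    and lS: "\<forall>v\<in>S. l \<le> fst v" by (rule kinv_level[OF ki])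
  let ?F = "{v. d v \<noteq> top \<and> fst v \<ge> cur_level ?n (d, S)}"
  have cF: "card ?F \<le> 2 * ?m"
  proof (cases "S = {}")
    case True
    have cl: "cur_level ?n (d, S) = ?n" using True unfolding cur_level_def by simp
    have Q2: "\<forall>v. d v \<noteq> top \<longrightarrow> fst v \<le> ?n \<and> snd v \<in> ?Q"
      using ki unfolding kinv_def fst_conv snd_conv by (elim conjE exE) assumption
    have "?F \<subseteq> {?n} \<times> ?Q"
    proof
      fix v assume "v \<in> ?F"
      then have "d v \<noteq> top" "?n \<le> fst v" using cl by auto
      then have "fst v \<le> ?n" "snd v \<in> ?Q" "?n \<le> fst v" using Q2 by blast+
      then show "v \<in> {?n} \<times> ?Q" by (simp add: mem_Times_iff)
    qed
    then have "card ?F \<le> card ({?n} \<times> ?Q)" by (rule card_mono[rotated]) (use finQ in simp)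
    then show ?thesis by (simp add: card_cartesian_product)
  next
    case False
    have finS: "finite S" by (rule finite_subset[OF l]) (use finQ in simp)
    have "l \<le> Min (fst ` S)" using False finS lS by simp
    then have cl: "l \<le> cur_level ?n (d, S)" using False unfolding cur_level_def by simp
    have "?F \<subseteq> {l, Suc l} \<times> ?Q"
    proof
      fix v assume "v \<in> ?F"
      then have "d v \<noteq> top" "l \<le> fst v" using cl by auto
      then have "fst v \<le> Suc l" "snd v \<in> ?Q" "l \<le> fst v" using fl by (auto simp: mem_Times_iff)
      then show "v \<in> {l, Suc l} \<times> ?Q" by (auto simp: mem_Times_iff)
    qed
    then have "card ?F \<le> card ({l, Suc l} \<times> ?Q)" by (rule card_mono[rotated]) (use finQ in simp)
    then show ?thesis using card_two_prod[OF finQ] by simp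
  qed
  have "?m \<le> wfa_size A" unfolding wfa_size_def by simp
  then have "?n + wfa_size A + card ?F \<le> 12 * (?n + wfa_size A)" using cF by simp
  then have "real (?n + wfa_size A + card ?F) \<le> real (12 * (?n + wfa_size A))" by (rule of_nat_mono)
  then show ?thesis unfolding conf_space_def dS fst_conv by simp
qed

lemma result_bound:
  assumes wf: "wf_wfa A" and run: "is_run c x A qs cs" and e: "snd (last cs) = {}"
  shows "run_result x A (last cs) = dist_to_wfa c x A"
proof -
  have len: "length cs = Suc (length qs)" using run unfolding is_run_def by simp
  have "cs \<noteq> []" using len by auto
  then have lst: "last cs = cs ! length qs" by (simp add: last_conv_nth len)
  obtain d S where dS: "last cs = (d, S)" by (cases "last cs")
  have S: "S = {}" using e dS by simp
  have "cinv (U_edges c x A) (fst (init_conf A)) (d, {})"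
    using run_inv[OF wf run, of "length qs"] lst dS S by simp
  then have "\<forall>v. d v = gdist (U_edges c x A) (fst (init_conf A)) v" using final_dist by blast
  then show ?thesis using result_correct[OF wf] dS by simp
qed

theorem corollary1:
  fixes c :: "'a::finite edit \<Rightarrow> ennreal"
  assumes "\<forall>\<omega> \<in> Omega. c \<omega> < top"
  shows "\<exists>C::real. \<forall>(x::'a list) (A::'a wfa) qs cs.
           wf_wfa A \<and> is_run c x A qs cs \<longrightarrow>
             run_time x A qs cs
               \<le> C * max 1 (real (length x)) * real (wfa_size A)
                    * max 1 (log 2 (real (card (states A))))
           \<and> (\<forall>k < length cs. conf_space x A (cs ! k) \<le> C * real (length x + wfa_size A))
           \<and> (snd (last cs) = {} \<longrightarrow> run_result x A (last cs) = dist_to_wfa c x A)"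
  by (rule exI[of _ 12]) (blast intro: time_bound space_bound result_bound)

end
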